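(* For $X,Y\in L^\infty$, \[ d_H(\mathbb{E}[X],\mathbb{E}[Y]) \le d_H(\mathrm{supp}\,X,\mathrm{supp}\,Y) \le \|X-Y\|_\infty, \] where $\mathrm{supp}\,X$ denotes the closed support of the law of $X$.
   Context: $\mathbb{K}$ is a local field with non-archimedean absolute value $|\cdot|$ satisfying $|x|=0 \iff x=0$, $|xy|=|x||y|$ and $|x+y|\le |x|\vee|y|$. $(\Omega,\mathcal{F},\mathbb{P})$ is a probability space; random variables equal a.s. are identified. $L^\infty$ is the space of $\mathbb{K}$-valued random variables $X$ with $\|X\|_\infty:=\operatorname{ess\,sup}|X|<\infty$. For $X\in L^\infty$, $\varepsilon(X):=\inf\{\|X-c\|_\infty : c\in\mathbb{K}\}$ and $\mathbb{E}[X]:=\{c\in\mathbb{K} : \|X-c\|_\infty=\varepsilon(X)\}$. For subsets $A,B\subseteq\mathbb{K}$, $d_H(A,B):=\sup_{a\in A}\inf_{b\in B}|a-b| \vee \sup_{b\in B}\inf_{a\in A}|b-a|$. *)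

theory Defs
  imports "HOL-Analysis.Analysis" "HOL-Probability.Probability"
begin

definition nonarch_local_field :: "('k::{field,metric_space} \<Rightarrow> real) \<Rightarrow> bool" where
  "nonarch_local_field av \<longleftrightarrow>
     (\<forall>x. av x = 0 \<longleftrightarrow> x = 0) \<and>
     (\<forall>x. av x \<ge> 0) \<and>
     (\<forall>x y. av (x * y) = av x * av y) \<and>
     (\<forall>x y. av (x + y) \<le> max (av x) (av y)) \<and>
     (\<forall>x y. dist x y = av (x - y)) \<and>
     (\<exists>x. av x \<noteq> 0 \<and> av x \<noteq> 1) \<and>
     locally_compact_space (euclidean :: 'k topology)"

definition linf :: "'a measure \<Rightarrow> ('k \<Rightarrow> real) \<Rightarrow> ('a \<Rightarrow> 'k) \<Rightarrow> ereal" where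
  "linf M av X = esssup M (\<lambda>\<omega>. ereal (av (X \<omega>)))"

definition Linf :: "'a measure \<Rightarrow> ('k::topological_space \<Rightarrow> real) \<Rightarrow> ('a \<Rightarrow> 'k) set" where
  "Linf M av = {X. X \<in> borel_measurable M \<and> linf M av X < \<infinity>}"

definition eps_dev :: "'a measure \<Rightarrow> ('k::ab_group_add \<Rightarrow> real) \<Rightarrow> ('a \<Rightarrow> 'k) \<Rightarrow> ereal" where
  "eps_dev M av X = (INF c. linf M av (\<lambda>\<omega>. X \<omega> - c))"

definition Expect :: "'a measure \<Rightarrow> ('k::ab_group_add \<Rightarrow> real) \<Rightarrow> ('a \<Rightarrow> 'k) \<Rightarrow> 'k set" where
  "Expect M av X = {c. linf M av (\<lambda>\<omega>. X \<omega> - c) = eps_dev M av X}"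

definition supp_law :: "'a measure \<Rightarrow> ('a \<Rightarrow> 'k::topological_space) \<Rightarrow> 'k set" where
  "supp_law M X = {x. \<forall>U. open U \<and> x \<in> U \<longrightarrow> emeasure (distr M borel X) U > 0}"

definition dH :: "('k::ab_group_add \<Rightarrow> real) \<Rightarrow> 'k set \<Rightarrow> 'k set \<Rightarrow> ereal" where
  "dH av A B = max (SUP a\<in>A. INF b\<in>B. ereal (av (a - b))) (SUP b\<in>B. INF a\<in>A. ereal (av (b - a)))"

end

theory Submission
  imports Defs
begin


lemma nlf_dist: "nonarch_local_field av \<Longrightarrow> dist x y = av (x - y)"
  unfolding nonarch_local_field_def by auto

lemma nlf_ultra:
  fixes a b c :: "'k::{field,metric_space}" and av :: "'k \<Rightarrow> real"
  assumes "nonarch_local_field av"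
  shows "dist a c \<le> max (dist a b) (dist b c)"
proof -
  have "dist a c = av ((a - b) + (b - c))" using nlf_dist[OF assms] by simp
  also have "\<dots> \<le> max (av (a - b)) (av (b - c))" using assms unfolding nonarch_local_field_def by blast
  finally show ?thesis using nlf_dist[OF assms] by simp
qed

lemma nlf_compact_cball:
  fixes av :: "'k::{field,metric_space} \<Rightarrow> real"
  assumes A: "nonarch_local_field av"
  shows "compact (cball (x::'k) r)"
proof -
  have mult: "\<And>x y. av (x * y) = av x * av y" and nn: "\<And>x. av x \<ge> 0"
    and z: "\<And>x. av x = 0 \<longleftrightarrow> x = 0"
    using A unfolding nonarch_local_field_def by auto
  have lc: "locally_compact_space (euclidean :: 'k topology)"
    using A unfolding nonarch_local_field_def by auto
  obtain U K where U: "open U" "compact K" "(0::'k) \<in> U" "U \<subseteq> K"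
    using lc unfolding locally_compact_space_def by (metis UNIV_I open_openin topspace_euclidean compactin_euclidean_iff)
  obtain e where e: "e > 0" "ball 0 e \<subseteq> U" using U open_contains_ball by blast
  have ck: "compact (cball (0::'k) (e/2))"
  proof -
    have "cball (0::'k) (e/2) \<subseteq> K" proof -
      have "cball (0::'k) (e/2) \<subseteq> ball 0 e" using e(1) by auto
      then show ?thesis using e(2) U(4) by blast
    qed
    then show ?thesis using U(2) by (metis closed_cball compact_Int_closed inf.absorb_iff2)
  qed
  have av1: "av 1 = 1" using mult[of 1 1] z[of 1] by simp
  obtain w where w: "av w \<noteq> 0" "av w \<noteq> 1" using A unfolding nonarch_local_field_def by auto
  obtain t where t: "av t > 1"
  proof (cases "av w > 1")
    case True then show ?thesis using that by blast
  next
    case False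
    then have lt: "av w < 1" "av w > 0" using w nn[of w] by auto
    have "av (inverse w) * av w = 1" using mult[of "inverse w" w] av1 w z by simp
    then have "av (inverse w) = 1 / av w" using lt by (simp add: field_simps)
    then have "av (inverse w) > 1" using lt by simp
    then show ?thesis using that by blast
  qed
  obtain n where n: "r + av x < av t ^ n * (e/2)"
  proof -
    obtain n where "(r + av x) / (e/2) < av t ^ n" using real_arch_pow[OF t] by blast
    then show ?thesis using that e by (simp add: field_simps)
  qed
  define s where "s = t ^ n"
  have avs: "av s = av t ^ n" unfolding s_def by (induction n) (auto simp: mult av1)
  have s0: "s \<noteq> 0" using avs t z by (metis power_eq_0_iff less_irrefl zero_less_one order.strict_trans)
  have avsp: "av s > 0" using avs t by simp
  have cont: "continuous_on (cball 0 (e/2)) (\<lambda>z. s * z)"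
    unfolding continuous_on_iff
  proof (intro ballI allI impI)
    fix x0 :: 'k and \<epsilon> :: real assume "\<epsilon> > 0"
    show "\<exists>\<delta>>0. \<forall>x'\<in>cball 0 (e / 2). dist x' x0 < \<delta> \<longrightarrow> dist (s * x') (s * x0) < \<epsilon>"
    proof (intro exI[of _ "\<epsilon> / av s"] conjI ballI impI)
      show "\<epsilon> / av s > 0" using \<open>\<epsilon> > 0\<close> avsp by simp
      fix x' assume "dist x' x0 < \<epsilon> / av s"
      then have "av s * av (x' - x0) < \<epsilon>" using nlf_dist[OF A] avsp by (simp add: field_simps)
      moreover have "dist (s * x') (s * x0) = av s * av (x' - x0)"
        using nlf_dist[OF A] mult by (simp add: right_diff_distrib[symmetric])
      ultimately show "dist (s * x') (s * x0) < \<epsilon>" by simp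
    qed
  qed
  have cbig: "compact ((\<lambda>z. s * z) ` cball 0 (e/2))"
    by (rule compact_continuous_image[OF cont ck])
  have sub: "cball x r \<subseteq> (\<lambda>z. s * z) ` cball 0 (e/2)"
  proof
    fix y assume y: "y \<in> cball x r"
    have "av y \<le> r + av x"
    proof -
      have "av y = dist y 0" using nlf_dist[OF A] by simp
      also have "\<dots> \<le> dist y x + dist x 0" by (rule dist_triangle)
      also have "\<dots> \<le> r + av x" using y nlf_dist[OF A, of x 0] by (simp add: dist_commute)
      finally show ?thesis .
    qed
    then have "av y < av s * (e/2)" using n avs by simp
    moreover have "av (y / s) * av s = av y" using mult[of "y/s" s] s0 by simp
    ultimately have "av (y / s) \<le> e/2" using avsp
      by (metis less_imp_le mult.commute mult_less_cancel_left_pos)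
    then have "y / s \<in> cball 0 (e/2)" using nlf_dist[OF A, of 0 "y/s"] mult
      by (metis diff_0 mem_cball mult_minus1 nlf_dist[OF A] dist_commute diff_zero)
    moreover have "y = s * (y / s)" using s0 by simp
    ultimately show "y \<in> (\<lambda>z. s * z) ` cball 0 (e/2)" by blast
  qed
  show ?thesis using sub cbig by (metis closed_cball compact_Int_closed inf.absorb_iff2)
qed


lemma meas_set:
  assumes "X \<in> borel_measurable M" "A \<in> sets borel"
  shows "{\<omega>\<in>space M. X \<omega> \<in> A} \<in> sets M"
proof -
  have "X -` A \<inter> space M \<in> sets M" by (rule measurable_sets[OF assms])
  moreover have "X -` A \<inter> space M = {\<omega>\<in>space M. X \<omega> \<in> A}" by auto
  ultimately show ?thesis by simp
qed

lemma null_iff: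
  assumes "{\<omega>\<in>space M. P \<omega>} \<in> sets M"
  shows "emeasure M {\<omega>\<in>space M. P \<omega>} = 0 \<longleftrightarrow> (AE \<omega> in M. \<not> P \<omega>)"
  using AE_iff_measurable[OF assms, of "\<lambda>\<omega>. \<not> P \<omega>"] by simp

lemma supp_iff:
  assumes "X \<in> borel_measurable M"
  shows "x \<in> supp_law M X \<longleftrightarrow> (\<forall>U. open U \<and> x \<in> U \<longrightarrow> emeasure M {\<omega>\<in>space M. X \<omega> \<in> U} \<noteq> 0)"
proof -
  have "\<And>U. open U \<Longrightarrow> emeasure (distr M borel X) U = emeasure M {\<omega>\<in>space M. X \<omega> \<in> U}"
  proof -
    fix U :: "'b set" assume "open U"
    then have "emeasure (distr M borel X) U = emeasure M (X -` U \<inter> space M)"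
      using emeasure_distr[OF assms] by auto
    moreover have "X -` U \<inter> space M = {\<omega>\<in>space M. X \<omega> \<in> U}" by auto
    ultimately show "emeasure (distr M borel X) U = emeasure M {\<omega>\<in>space M. X \<omega> \<in> U}" by simp
  qed
  then show ?thesis unfolding supp_law_def by (auto simp: zero_less_iff_neq_zero)
qed

lemma supp_hit:
  fixes X :: "'a \<Rightarrow> 'k::metric_space"
  assumes X: "X \<in> borel_measurable M" and C: "compact C"
    and pos: "emeasure M {\<omega>\<in>space M. X \<omega> \<in> C} \<noteq> 0"
  shows "\<exists>x\<in>C. x \<in> supp_law M X"
proof (rule ccontr)
  assume "\<not> ?thesis"
  then have "\<forall>x\<in>C. \<exists>U. open U \<and> x \<in> U \<and> emeasure M {\<omega>\<in>space M. X \<omega> \<in> U} = 0"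
    using supp_iff[OF X] by blast
  then obtain Uf where Uf: "\<And>x. x \<in> C \<Longrightarrow> open (Uf x) \<and> x \<in> Uf x \<and> emeasure M {\<omega>\<in>space M. X \<omega> \<in> Uf x} = 0"
    by metis
  have "C \<subseteq> (\<Union>c\<in>C. Uf c)" using Uf by blast
  then obtain C' where C': "C' \<subseteq> C" "finite C'" "C \<subseteq> (\<Union>c\<in>C'. Uf c)"
    using compactE_image[OF C, of C Uf] Uf by blast
  have nullc: "\<And>c. c \<in> C' \<Longrightarrow> AE \<omega> in M. \<not> X \<omega> \<in> Uf c"
  proof -
    fix c assume "c \<in> C'"
    then have "open (Uf c)" "emeasure M {\<omega>\<in>space M. X \<omega> \<in> Uf c} = 0" using Uf C' by auto
    then show "AE \<omega> in M. \<not> X \<omega> \<in> Uf c" using null_iff[OF meas_set[OF X]] by auto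
  qed
  have "AE \<omega> in M. \<forall>c\<in>C'. \<not> X \<omega> \<in> Uf c" by (rule AE_finite_allI[OF C'(2)]) (rule nullc)
  then have "AE \<omega> in M. \<not> X \<omega> \<in> C"
  proof eventually_elim
    case (elim \<omega>)
    show ?case
    proof
      assume "X \<omega> \<in> C"
      then obtain c where "c \<in> C'" "X \<omega> \<in> Uf c" using C'(3) by blast
      then show False using elim by blast
    qed
  qed
  then have "emeasure M {\<omega>\<in>space M. X \<omega> \<in> C} = 0"
    using null_iff[OF meas_set[OF X borel_closed[OF compact_imp_closed[OF C]]]] by auto
  then show False using pos by simp
qed

lemma supp_nonempty:
  fixes X :: "'a \<Rightarrow> 'k::metric_space"
  assumes P: "prob_space M" and X: "X \<in> borel_measurable M" and C: "compact C"
    and ae: "AE \<omega> in M. X \<omega> \<in> C"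
  shows "\<exists>x\<in>C. x \<in> supp_law M X"
proof (rule supp_hit[OF X C], rule notI)
  assume "emeasure M {\<omega>\<in>space M. X \<omega> \<in> C} = 0"
  then have "AE \<omega> in M. \<not> X \<omega> \<in> C"
    using null_iff[OF meas_set[OF X borel_closed[OF compact_imp_closed[OF C]]]] by auto
  with ae have "AE \<omega> in M. False" by eventually_elim auto
  then show False using prob_space.AE_False[OF P] by simp
qed

lemma linf_dist:
  assumes A: "nonarch_local_field av"
  shows "linf M av (\<lambda>\<omega>. X \<omega> - c) = esssup M (\<lambda>\<omega>. ereal (dist (X \<omega>) c))"
  unfolding linf_def using nlf_dist[OF A] by simp

lemma meas_dist:
  assumes X: "X \<in> borel_measurable M"
  shows "(\<lambda>\<omega>. ereal (dist (X \<omega>) (c::'k::metric_space))) \<in> borel_measurable M"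
proof -
  have "continuous_on UNIV (\<lambda>z::'k. ereal (dist z c))" by (intro continuous_intros)
  then show ?thesis using borel_measurable_continuous_on[OF _ X] by blast
qed

lemma AE_bound:
  assumes A: "nonarch_local_field av" and fin: "linf M av X < \<infinity>"
  shows "\<exists>R. AE \<omega> in M. dist (X \<omega>) 0 \<le> R"
proof -
  have e: "linf M av (\<lambda>\<omega>. X \<omega> - 0) < \<infinity>" using fin by simp
  obtain R where R: "linf M av (\<lambda>\<omega>. X \<omega> - 0) \<le> ereal R"
    using e by (cases "linf M av (\<lambda>\<omega>. X \<omega> - 0)") auto
  have "AE \<omega> in M. ereal (dist (X \<omega>) 0) \<le> linf M av (\<lambda>\<omega>. X \<omega> - 0)"
    unfolding linf_dist[OF A] by (rule esssup_AE)
  then have "AE \<omega> in M. dist (X \<omega>) 0 \<le> R"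
  proof eventually_elim
    case (elim \<omega>)
    then have "ereal (dist (X \<omega>) 0) \<le> ereal R" using R order_trans by blast
    then show ?case by simp
  qed
  then show ?thesis by blast
qed

lemma supp_le:
  assumes A: "nonarch_local_field av" and X: "X \<in> borel_measurable M"
    and s: "s \<in> supp_law M X"
  shows "ereal (dist s c) \<le> linf M av (\<lambda>\<omega>. X \<omega> - c)"
proof (rule ereal_le_epsilon2)
  fix d :: real assume d: "0 < d"
  let ?L = "linf M av (\<lambda>\<omega>. X \<omega> - c)"
  have ae: "AE \<omega> in M. ereal (dist (X \<omega>) c) \<le> ?L"
    unfolding linf_dist[OF A] by (rule esssup_AE)
  have "open (ball s d)" "s \<in> ball s d" using d by auto
  then have "emeasure M {\<omega>\<in>space M. X \<omega> \<in> ball s d} \<noteq> 0"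
    using s supp_iff[OF X] by blast
  then have "\<not> (AE \<omega> in M. \<not> X \<omega> \<in> ball s d)"
    using null_iff[OF meas_set[OF X borel_open[OF \<open>open (ball s d)\<close>]]] by blast
  then obtain \<omega> where "X \<omega> \<in> ball s d" "ereal (dist (X \<omega>) c) \<le> ?L"
  proof -
    assume H: "\<And>\<omega>. X \<omega> \<in> ball s d \<Longrightarrow> ereal (dist (X \<omega>) c) \<le> ?L \<Longrightarrow> thesis"
    show thesis
    proof (rule ccontr)
      assume nt: "\<not> thesis"
      from ae have "AE \<omega> in M. \<not> X \<omega> \<in> ball s d" by eventually_elim (use H nt in blast)
      then show False using \<open>\<not> (AE \<omega> in M. \<not> X \<omega> \<in> ball s d)\<close> by simp
    qed
  qed
  moreover have "dist s c \<le> d + dist (X \<omega>) c"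
    using dist_triangle[of s c "X \<omega>"] \<open>X \<omega> \<in> ball s d\<close> by simp
  ultimately show "ereal (dist s c) \<le> ?L + ereal d"
  proof -
    assume h1: "ereal (dist (X \<omega>) c) \<le> ?L" and h2: "dist s c \<le> d + dist (X \<omega>) c"
    have "ereal (dist s c) \<le> ereal (dist (X \<omega>) c) + ereal d" using h2 by simp
    also have "\<dots> \<le> ?L + ereal d" using h1 by (rule add_right_mono)
    finally show ?thesis .
  qed
qed


lemma le_supp:
  fixes X :: "'a \<Rightarrow> 'k::{field,metric_space}"
  assumes A: "nonarch_local_field av" and P: "prob_space M" and X: "X \<in> borel_measurable M"
    and fin: "linf M av X < \<infinity>" and H: "\<forall>s\<in>supp_law M X. dist s c \<le> r"
  shows "linf M av (\<lambda>\<omega>. X \<omega> - c) \<le> ereal r"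
proof -
  obtain R where R: "AE \<omega> in M. dist (X \<omega>) 0 \<le> R" using AE_bound[OF A fin] by blast
  define Cn where "Cn n = cball 0 R - ball c (r + inverse (real (Suc n)))" for n
  have "\<And>n. AE \<omega> in M. \<not> X \<omega> \<in> Cn n"
  proof -
    fix n
    have cc: "compact (Cn n)" unfolding Cn_def
      by (intro compact_diff nlf_compact_cball[OF A] open_ball)
    have "\<not> (\<exists>x\<in>Cn n. x \<in> supp_law M X)"
    proof
      assume "\<exists>x\<in>Cn n. x \<in> supp_law M X"
      then obtain x where x: "x \<in> Cn n" "x \<in> supp_law M X" by blast
      then have "dist x c \<le> r" using H by blast
      moreover have "dist c x \<ge> r + inverse (real (Suc n))" using x(1) unfolding Cn_def by auto
      moreover have "inverse (real (Suc n)) > 0" by simp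
      ultimately show False by (simp add: dist_commute)
    qed
    then have "emeasure M {\<omega>\<in>space M. X \<omega> \<in> Cn n} = 0" using supp_hit[OF X cc] by blast
    then show "AE \<omega> in M. \<not> X \<omega> \<in> Cn n"
      using null_iff[OF meas_set[OF X borel_closed[OF compact_imp_closed[OF cc]]]] by blast
  qed
  then have "AE \<omega> in M. \<forall>n. \<not> X \<omega> \<in> Cn n" by (simp add: AE_all_countable)
  with R have "AE \<omega> in M. ereal (dist (X \<omega>) c) \<le> ereal r"
  proof eventually_elim
    case (elim \<omega>)
    show ?case
    proof (rule ccontr)
      assume "\<not> ?case"
      then have "dist (X \<omega>) c - r > 0" by simp
      then obtain n where n: "inverse (real (Suc n)) < dist (X \<omega>) c - r"
        using reals_Archimedean by blast
      have "X \<omega> \<in> Cn n" unfolding Cn_def using elim(1) n by (auto simp: dist_commute)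
      then show False using elim(2) by blast
    qed
  qed
  then show ?thesis unfolding linf_dist[OF A] by (rule esssup_I[OF meas_dist[OF X]])
qed


lemma expect_char:
  fixes X :: "'a \<Rightarrow> 'k::{field,metric_space}"
  assumes A: "nonarch_local_field av" and P: "prob_space M" and X: "X \<in> borel_measurable M"
    and fin: "linf M av X < \<infinity>"
  shows "\<exists>s0 D. s0 \<in> supp_law M X \<and> (\<forall>s\<in>supp_law M X. dist s s0 \<le> D)
     \<and> (\<forall>r. (\<forall>s\<in>supp_law M X. dist s s0 \<le> r) \<longrightarrow> D \<le> r)
     \<and> Expect M av X = {c. \<forall>s\<in>supp_law M X. dist s c \<le> D}"
proof -
  let ?S = "supp_law M X"
  define f where "f c = linf M av (\<lambda>\<omega>. X \<omega> - c)" for c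
  obtain R where R: "AE \<omega> in M. dist (X \<omega>) 0 \<le> R" using AE_bound[OF A fin] by blast
  from R have "AE \<omega> in M. X \<omega> \<in> cball 0 R" by eventually_elim (simp add: dist_commute)
  then obtain s0 where s0: "s0 \<in> ?S" using supp_nonempty[OF P X nlf_compact_cball[OF A]] by blast
  from R have "AE \<omega> in M. ereal (dist (X \<omega>) 0) \<le> ereal R" by eventually_elim simp
  then have f0: "f 0 \<le> ereal R" unfolding f_def linf_dist[OF A] by (rule esssup_I[OF meas_dist[OF X]])
  have bnd: "\<forall>s\<in>?S. dist s s0 \<le> 2 * R"
  proof
    fix s assume s: "s \<in> ?S"
    have "ereal (dist s 0) \<le> f 0" unfolding f_def by (rule supp_le[OF A X s])
    then have "ereal (dist s 0) \<le> ereal R" using f0 order_trans by blast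
    then have "dist s 0 \<le> R" by simp
    moreover have "ereal (dist s0 0) \<le> f 0" unfolding f_def by (rule supp_le[OF A X s0])
    then have "ereal (dist s0 0) \<le> ereal R" using f0 order_trans by blast
    then have "dist s0 0 \<le> R" by simp
    ultimately show "dist s s0 \<le> 2 * R" using dist_triangle[of s s0 0] by (simp add: dist_commute)
  qed
  have up: "f s0 \<le> ereal (2 * R)" unfolding f_def by (rule le_supp[OF A P X fin bnd])
  have lo: "ereal 0 \<le> f s0" using supp_le[OF A X s0, of s0] unfolding f_def by simp
  define D where "D = real_of_ereal (f s0)"
  have fD: "f s0 = ereal D" unfolding D_def using up lo by (cases "f s0") auto
  have P1: "\<forall>s\<in>?S. dist s s0 \<le> D"
    using supp_le[OF A X] fD unfolding f_def by (metis ereal_less_eq(3))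
  have P2: "\<forall>r. (\<forall>s\<in>?S. dist s s0 \<le> r) \<longrightarrow> D \<le> r"
  proof (intro allI impI)
    fix r assume "\<forall>s\<in>?S. dist s s0 \<le> r"
    then have "f s0 \<le> ereal r" unfolding f_def by (rule le_supp[OF A P X fin])
    then show "D \<le> r" using fD by simp
  qed
  have lowb: "\<And>c. ereal D \<le> f c"
  proof (rule ccontr)
    fix c assume "\<not> ereal D \<le> f c"
    then have lt: "f c < ereal D" by simp
    have "ereal (dist s0 c) \<le> f c" unfolding f_def by (rule supp_le[OF A X s0])
    moreover have "(0::ereal) \<le> ereal (dist s0 c)" by simp
    ultimately have "f c \<ge> 0" using order_trans by blast
    then obtain r where r: "f c = ereal r" using lt by (cases "f c") auto
    have hc: "\<forall>s\<in>?S. dist s c \<le> r" using supp_le[OF A X] r unfolding f_def by (metis ereal_less_eq(3))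
    have "\<forall>s\<in>?S. dist s s0 \<le> r"
    proof
      fix s assume "s \<in> ?S"
      then have "dist s c \<le> r" "dist c s0 \<le> r" using hc s0 by (auto simp: dist_commute)
      then show "dist s s0 \<le> r" using nlf_ultra[OF A, of s s0 c] by simp
    qed
    then have "D \<le> r" using P2 by blast
    then show False using lt r by simp
  qed
  have eps: "eps_dev M av X = ereal D"
  proof (rule antisym)
    show "eps_dev M av X \<le> ereal D" unfolding eps_dev_def using fD unfolding f_def
      by (metis INF_lower UNIV_I)
    show "ereal D \<le> eps_dev M av X" unfolding eps_dev_def using lowb unfolding f_def
      by (simp add: INF_greatest)
  qed
  have E: "Expect M av X = {c. \<forall>s\<in>?S. dist s c \<le> D}"
  proof (intro set_eqI iffI)
    fix c assume "c \<in> Expect M av X"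
    then have "f c = ereal D" unfolding Expect_def eps f_def by simp
    then have "\<forall>s\<in>?S. ereal (dist s c) \<le> ereal D" using supp_le[OF A X] unfolding f_def by metis
    then show "c \<in> {c. \<forall>s\<in>?S. dist s c \<le> D}" by simp
  next
    fix c assume "c \<in> {c. \<forall>s\<in>?S. dist s c \<le> D}"
    then have "f c \<le> ereal D" unfolding f_def by (intro le_supp[OF A P X fin]) simp
    then have "f c = ereal D" using lowb[of c] by simp
    then show "c \<in> Expect M av X" unfolding Expect_def eps f_def by simp
  qed
  show ?thesis using s0 P1 P2 E by blast
qed


lemma core:
  fixes a :: "'k::metric_space"
  assumes U: "\<And>a b c::'k. dist a c \<le> max (dist a b) (dist b c)"
    and x0: "x0 \<in> SX" and hX1: "\<forall>s\<in>SX. dist s x0 \<le> DX"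
    and hX2: "\<forall>r. (\<forall>s\<in>SX. dist s x0 \<le> r) \<longrightarrow> DX \<le> r"
    and y0: "y0 \<in> SY" and hY1: "\<forall>s\<in>SY. dist s y0 \<le> DY"
    and t1: "\<forall>x\<in>SX. \<exists>y\<in>SY. dist x y \<le> t" and t2: "\<forall>y\<in>SY. \<exists>x\<in>SX. dist x y \<le> t"
    and a: "\<forall>s\<in>SX. dist s a \<le> DX"
  shows "\<exists>b. (\<forall>s\<in>SY. dist s b \<le> DY) \<and> dist a b \<le> t"
proof -
  have pw: "\<And>s s'. s \<in> SY \<Longrightarrow> s' \<in> SY \<Longrightarrow> dist s s' \<le> DY"
  proof -
    fix s s' assume "s \<in> SY" "s' \<in> SY"
    then have "dist s y0 \<le> DY" "dist y0 s' \<le> DY" using hY1 by (auto simp: dist_commute)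
    then show "dist s s' \<le> DY" using U[where a=s and b=y0 and c=s'] by simp
  qed
  obtain y where y: "y \<in> SY" "dist x0 y \<le> t" using t1 x0 by blast
  have DX: "DX \<le> max DY t"
  proof -
    have "\<forall>s\<in>SX. dist s x0 \<le> max DY t"
    proof
      fix s assume "s \<in> SX"
      then obtain ys where ys: "ys \<in> SY" "dist s ys \<le> t" using t1 by blast
      have "dist ys y \<le> DY" using pw ys y by blast
      then have "dist ys x0 \<le> max DY t" using U[where a=ys and b=y and c=x0] y by (simp add: dist_commute)
      then show "dist s x0 \<le> max DY t" using U[where a=s and b=ys and c=x0] ys by simp
    qed
    then show ?thesis using hX2 by blast
  qed
  show ?thesis
  proof (cases "\<forall>s\<in>SY. dist s a \<le> DY")
    case True
    have "0 \<le> t" using y(2) zero_le_dist[of x0 y] by linarith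
    then show ?thesis using True by (intro exI[of _ a]) simp
  next
    case False
    then obtain s where s: "s \<in> SY" "dist s a > DY" by force
    have yE: "\<forall>s\<in>SY. dist s y \<le> DY" using pw y by blast
    have "dist a y \<le> max (dist a x0) (dist x0 y)" by (rule U)
    moreover have "dist a x0 \<le> DX" using a x0 by (metis dist_commute)
    ultimately have ay: "dist a y \<le> max DY t" using DX y by simp
    have "dist s a \<le> max (dist s y) (dist y a)" by (rule U)
    moreover have "dist s y \<le> DY" using yE s by blast
    ultimately have "dist y a > DY" using s by simp
    then have "dist a y \<le> t" using ay by (simp add: dist_commute)
    then show ?thesis using yE by blast
  qed
qed

lemma part1half:
  fixes SX SY :: "'k::metric_space set"
  assumes U: "\<And>a b c::'k. dist a c \<le> max (dist a b) (dist b c)"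
    and x0: "x0 \<in> SX" and hX1: "\<forall>s\<in>SX. dist s x0 \<le> DX"
    and hX2: "\<forall>r. (\<forall>s\<in>SX. dist s x0 \<le> r) \<longrightarrow> DX \<le> r"
    and y0: "y0 \<in> SY" and hY1: "\<forall>s\<in>SY. dist s y0 \<le> DY"
    and Ex1s: "Ex1s = {c. \<forall>s\<in>SX. dist s c \<le> DX}" and Ey1s: "Ey1s = {c. \<forall>s\<in>SY. dist s c \<le> DY}"
    and h1: "(SUP x\<in>SX. INF y\<in>SY. ereal (dist x y)) \<le> h"
    and h2: "(SUP y\<in>SY. INF x\<in>SX. ereal (dist y x)) \<le> h"
  shows "(SUP a\<in>Ex1s. INF b\<in>Ey1s. ereal (dist a b)) \<le> h"
proof (rule SUP_least)
  fix a assume aE: "a \<in> Ex1s"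
  show "(INF b\<in>Ey1s. ereal (dist a b)) \<le> h"
  proof (rule ereal_le_epsilon2)
    fix d :: real assume d: "0 < d"
    show "(INF b\<in>Ey1s. ereal (dist a b)) \<le> h + ereal d"
    proof (cases "h = \<infinity>")
      case True then show ?thesis by simp
    next
      case False
      have i1: "\<And>x. x \<in> SX \<Longrightarrow> (INF y\<in>SY. ereal (dist x y)) \<le> h"
        using h1 by (meson SUP_upper order_trans)
      have i2: "\<And>y. y \<in> SY \<Longrightarrow> (INF x\<in>SX. ereal (dist y x)) \<le> h"
        using h2 by (meson SUP_upper order_trans)
      have "0 \<le> (INF y\<in>SY. ereal (dist x0 y))" by (rule INF_greatest) simp
      then have "0 \<le> h" using i1[OF x0] by simp
      then obtain hr where hr: "h = ereal hr" using False by (cases h) auto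
      define t where "t = hr + d"
      have lt: "h < ereal t" using hr d t_def by simp
      have t1: "\<forall>x\<in>SX. \<exists>y\<in>SY. dist x y \<le> t"
      proof
        fix x assume "x \<in> SX"
        then have "(INF y\<in>SY. ereal (dist x y)) < ereal t" using i1 lt by (meson order_le_less_trans)
        then obtain y where "y \<in> SY" "ereal (dist x y) < ereal t" by (auto simp: INF_less_iff)
        then show "\<exists>y\<in>SY. dist x y \<le> t" by (auto intro: less_imp_le)
      qed
      have t2: "\<forall>y\<in>SY. \<exists>x\<in>SX. dist x y \<le> t"
      proof
        fix y assume "y \<in> SY"
        then have "(INF x\<in>SX. ereal (dist y x)) < ereal t" using i2 lt by (meson order_le_less_trans)
        then obtain x where xx: "x \<in> SX" "ereal (dist y x) < ereal t" by (auto simp: INF_less_iff)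
        then have "dist x y \<le> t" by (simp add: dist_commute)
        then show "\<exists>x\<in>SX. dist x y \<le> t" using xx(1) by blast
      qed
      have "\<forall>s\<in>SX. dist s a \<le> DX" using aE Ex1s by simp
      then obtain b where b: "\<forall>s\<in>SY. dist s b \<le> DY" "dist a b \<le> t"
        using core[OF U x0 hX1 hX2 y0 hY1 t1 t2] by blast
      have "b \<in> Ey1s" using b Ey1s by simp
      then have "(INF b\<in>Ey1s. ereal (dist a b)) \<le> ereal (dist a b)" by (rule INF_lower)
      also have "\<dots> \<le> ereal t" using b by simp
      also have "\<dots> = h + ereal d" using hr t_def by simp
      finally show ?thesis .
    qed
  qed
qed

lemma part2:
  fixes X Y :: "'a \<Rightarrow> 'k::{field,metric_space}" and av :: "'k \<Rightarrow> real"
  assumes A: "nonarch_local_field av" and P: "prob_space M"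
    and X: "X \<in> borel_measurable M" and Y: "Y \<in> borel_measurable M"
    and x: "x \<in> supp_law M X"
  shows "(INF y\<in>supp_law M Y. ereal (dist x y)) \<le> esssup M (\<lambda>\<omega>. ereal (dist (X \<omega>) (Y \<omega>)))"
    (is "?I \<le> ?L")
proof (rule ereal_le_epsilon2)
  fix d :: real assume d: "0 < d"
  show "?I \<le> ?L + ereal d"
  proof (cases "?L = \<infinity>")
    case True then show ?thesis by simp
  next
    case False
    have ae: "AE \<omega> in M. ereal (dist (X \<omega>) (Y \<omega>)) \<le> ?L" by (rule esssup_AE)
    have "?L \<noteq> -\<infinity>"
    proof
      assume m: "?L = -\<infinity>"
      from ae have "AE \<omega> in M. False" by eventually_elim (use m in simp)
      then show False using prob_space.AE_False[OF P] by simp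
    qed
    then obtain l where l: "?L = ereal l" using False by (cases ?L) auto
    let ?C = "cball x (l + d)"
    have cc: "compact ?C" by (rule nlf_compact_cball[OF A])
    have "emeasure M {\<omega>\<in>space M. Y \<omega> \<in> ?C} \<noteq> 0"
    proof
      assume "emeasure M {\<omega>\<in>space M. Y \<omega> \<in> ?C} = 0"
      then have aeY: "AE \<omega> in M. \<not> Y \<omega> \<in> ?C"
        using null_iff[OF meas_set[OF Y borel_closed[OF closed_cball]]] by blast
      from ae aeY have "AE \<omega> in M. \<not> X \<omega> \<in> ball x d"
      proof eventually_elim
        case (elim \<omega>)
        show ?case
        proof
          assume "X \<omega> \<in> ball x d"
          then have "dist x (X \<omega>) < d" by simp
          moreover have "dist (X \<omega>) (Y \<omega>) \<le> l" using elim(1) l by simp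
          ultimately have "dist x (Y \<omega>) \<le> l + d" using dist_triangle[of x "Y \<omega>" "X \<omega>"] by simp
          then show False using elim(2) by simp
        qed
      qed
      then have "emeasure M {\<omega>\<in>space M. X \<omega> \<in> ball x d} = 0"
        using null_iff[OF meas_set[OF X borel_open[OF open_ball]]] by blast
      moreover have "open (ball x d)" "x \<in> ball x d" using d by auto
      ultimately show False using x supp_iff[OF X] by blast
    qed
    then obtain y where y: "y \<in> ?C" "y \<in> supp_law M Y" using supp_hit[OF Y cc] by blast
    have "?I \<le> ereal (dist x y)" using y(2) by (rule INF_lower)
    also have "\<dots> \<le> ereal (l + d)" using y(1) by simp
    also have "\<dots> = ?L + ereal d" using l by simp
    finally show ?thesis .
  qed
qed

theorem mainTheorem3:
  fixes M :: "'a measure" and av :: "'k::{field,metric_space} \<Rightarrow> real"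
    and X Y :: "'a \<Rightarrow> 'k"
  assumes "nonarch_local_field av"
    and "prob_space M"
    and "X \<in> Linf M av" and "Y \<in> Linf M av"
  shows "dH av (Expect M av X) (Expect M av Y) \<le> dH av (supp_law M X) (supp_law M Y)
       \<and> dH av (supp_law M X) (supp_law M Y) \<le> linf M av (\<lambda>\<omega>. X \<omega> - Y \<omega>)"
proof -
  note A = assms(1) and P = assms(2)
  have X: "X \<in> borel_measurable M" and finX: "linf M av X < \<infinity>" using assms(3) unfolding Linf_def by auto
  have Y: "Y \<in> borel_measurable M" and finY: "linf M av Y < \<infinity>" using assms(4) unfolding Linf_def by auto
  have dH_eq: "\<And>S T. dH av S T = max (SUP a\<in>S. INF b\<in>T. ereal (dist a b)) (SUP b\<in>T. INF a\<in>S. ereal (dist b a))"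
    unfolding dH_def by (simp add: nlf_dist[OF A])
  have L: "linf M av (\<lambda>\<omega>. X \<omega> - Y \<omega>) = esssup M (\<lambda>\<omega>. ereal (dist (X \<omega>) (Y \<omega>)))"
    unfolding linf_def by (simp add: nlf_dist[OF A])
  have L': "linf M av (\<lambda>\<omega>. X \<omega> - Y \<omega>) = esssup M (\<lambda>\<omega>. ereal (dist (Y \<omega>) (X \<omega>)))"
    unfolding L by (simp add: dist_commute)
  let ?SX = "supp_law M X" and ?SY = "supp_law M Y"
  have s1: "(SUP x\<in>?SX. INF y\<in>?SY. ereal (dist x y)) \<le> linf M av (\<lambda>\<omega>. X \<omega> - Y \<omega>)"
    unfolding L by (rule SUP_least) (rule part2[OF A P X Y])
  have s2: "(SUP y\<in>?SY. INF x\<in>?SX. ereal (dist y x)) \<le> linf M av (\<lambda>\<omega>. X \<omega> - Y \<omega>)"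
    unfolding L' by (rule SUP_least) (rule part2[OF A P Y X])
  have second: "dH av ?SX ?SY \<le> linf M av (\<lambda>\<omega>. X \<omega> - Y \<omega>)"
    unfolding dH_eq using s1 s2 by simp
  let ?h = "dH av ?SX ?SY"
  have h1: "(SUP x\<in>?SX. INF y\<in>?SY. ereal (dist x y)) \<le> ?h" unfolding dH_eq by simp
  have h2: "(SUP y\<in>?SY. INF x\<in>?SX. ereal (dist y x)) \<le> ?h" unfolding dH_eq by simp
  obtain x0 DX where x0: "x0 \<in> ?SX" and hX1: "\<forall>s\<in>?SX. dist s x0 \<le> DX"
    and hX2: "\<forall>r. (\<forall>s\<in>?SX. dist s x0 \<le> r) \<longrightarrow> DX \<le> r"
    and EXq: "Expect M av X = {c. \<forall>s\<in>?SX. dist s c \<le> DX}"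
    using expect_char[OF A P X finX] by blast
  obtain y0 DY where y0: "y0 \<in> ?SY" and hY1: "\<forall>s\<in>?SY. dist s y0 \<le> DY"
    and hY2: "\<forall>r. (\<forall>s\<in>?SY. dist s y0 \<le> r) \<longrightarrow> DY \<le> r"
    and EYq: "Expect M av Y = {c. \<forall>s\<in>?SY. dist s c \<le> DY}"
    using expect_char[OF A P Y finY] by blast
  have U: "\<And>a b c::'k. dist a c \<le> max (dist a b) (dist b c)" by (rule nlf_ultra[OF A])
  have p1: "(SUP a\<in>Expect M av X. INF b\<in>Expect M av Y. ereal (dist a b)) \<le> ?h"
    by (rule part1half[OF U x0 hX1 hX2 y0 hY1 EXq EYq h1 h2])
  have p2: "(SUP b\<in>Expect M av Y. INF a\<in>Expect M av X. ereal (dist b a)) \<le> ?h"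
    by (rule part1half[OF U y0 hY1 hY2 x0 hX1 EYq EXq h2 h1])
  have first: "dH av (Expect M av X) (Expect M av Y) \<le> ?h"
    unfolding dH_eq[of "Expect M av X"] using p1 p2 by simp
  show ?thesis using first second by blast
qed

end
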